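(* Consider the market objective described in the context and fix a bid profile $\mathcal{B}$ with $J(\mathcal{B}_L)<\infty$. Let $$k_{\mathrm{feas}}=\max\{|R|:\ R\subseteq L,\ J(\mathcal{B}_{L\setminus R})<\infty\}$$ be the maximum number of bidders that can be removed while keeping the problem feasible, and assume $k_{\mathrm{feas}}\ge1$. Then for all $K,S\subseteq L$ with $J(\mathcal{B}_{S\setminus K})<\infty$, $$\frac{1}{k_{\mathrm{feas}}}\sum_{l\in K}\big[J(\mathcal{B}_{S\setminus\{l\}})-J(\mathcal{B}_S)\big]\le J(\mathcal{B}_{S\setminus K})-J(\mathcal{B}_S).$$ Consequently the market objective is weakly supermodular, with supermodularity ratio $\gamma_{\sup}\ge 1/k_{\mathrm{feas}}>0$ (where $k_{\mathrm{feas}}$ is taken as the maximum over the bid profiles considered); in particular, if the problem becomes infeasible whenever any two bidders are removed ($k_{\mathrm{feas}}=1$), the inequality holds with constant $1$.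
   Context: Market model. $L=\{1,\dots,|L|\}$ is a finite set of bidders and $t\ge1$. Bidder $l$ submits a bid function $b_l:\hat{\mathcal X}_l\to\mathbb{R}_+$ with $0\in\hat{\mathcal X}_l\subseteq\mathbb{R}^t_+$, $b_l(0)=0$; a bid profile is $\mathcal{B}=\{b_l\}_{l\in L}$. Fixed functions $d:\mathbb{R}^{t|L|}_+\times\mathbb{R}^p\to\mathbb{R}$ and $g:\mathbb{R}^{t|L|}_+\times\mathbb{R}^p\to\mathbb{R}^q$ are given. For $S\subseteq L$, $$J(\mathcal{B}_S)=\min\Big\{\sum_{l\in S}b_l(x_l)+d(x,y):\ x\in\textstyle\prod_{l\in L}\hat{\mathcal X}_l,\ y\in\mathbb{R}^p,\ g(x,y)\le0,\ x_l=0\ \forall l\notin S\Big\},$$ with value $+\infty$ if the problem is infeasible (minima assumed attained when finite). Supermodularity ratio of the market objective: the largest $\gamma\ge0$ such that for every bid profile $\mathcal{B}$ and all $K,S\subseteq L$ with $J(\mathcal{B}_{S\setminus K})<\infty$, $$\gamma\sum_{l\in K}\big[J(\mathcal{B}_{S\setminus\{l\}})-J(\mathcal{B}_S)\big]\le J(\mathcal{B}_{S\setminus K})-J(\mathcal{B}_S);$$ the objective is weakly supermodular if this ratio is positive. *)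

theory Defs
  imports "HOL-Analysis.Analysis"
begin

text \<open>Bidders form a finite set L (of some type 'b); each decision x_l lies in R^t,
  modelled as real^'t; auxiliary variables y lie in real^'p; constraint values g lie
  in real^'q.\<close>

definition market_bids ::
  "'b set \<Rightarrow> ('b \<Rightarrow> (real^'t) set) \<Rightarrow> ('b \<Rightarrow> real^'t \<Rightarrow> real) \<Rightarrow> bool" where
  "market_bids L Xh b \<longleftrightarrow> finite L \<and>
     (\<forall>l\<in>L. 0 \<in> Xh l \<and> Xh l \<subseteq> {v. \<forall>i. 0 \<le> v $ i} \<and> b l 0 = 0 \<and>
             (\<forall>v\<in>Xh l. 0 \<le> b l v))"

definition feas ::
  "'b set \<Rightarrow> ('b \<Rightarrow> (real^'t) set) \<Rightarrow> (('b \<Rightarrow> real^'t) \<Rightarrow> real^'p \<Rightarrow> real^'q)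
    \<Rightarrow> 'b set \<Rightarrow> (('b \<Rightarrow> real^'t) \<times> (real^'p)) set" where
  "feas L Xh g S = {(x, y). x \<in> PiE L Xh \<and> (\<forall>i. g x y $ i \<le> 0) \<and> (\<forall>l\<in>L - S. x l = 0)}"

definition market_obj ::
  "('b \<Rightarrow> real^'t \<Rightarrow> real) \<Rightarrow> (('b \<Rightarrow> real^'t) \<Rightarrow> real^'p \<Rightarrow> real)
    \<Rightarrow> 'b set \<Rightarrow> (('b \<Rightarrow> real^'t) \<times> (real^'p)) \<Rightarrow> real" where
  "market_obj b d S xy = (\<Sum>l\<in>S. b l (fst xy l)) + d (fst xy) (snd xy)"

text \<open>J(B_S): infimum (in the extended reals) of the objective over the feasible set;
  equals +infinity when infeasible.\<close>
definition Jm ::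
  "'b set \<Rightarrow> ('b \<Rightarrow> (real^'t) set) \<Rightarrow> ('b \<Rightarrow> real^'t \<Rightarrow> real)
    \<Rightarrow> (('b \<Rightarrow> real^'t) \<Rightarrow> real^'p \<Rightarrow> real) \<Rightarrow> (('b \<Rightarrow> real^'t) \<Rightarrow> real^'p \<Rightarrow> real^'q)
    \<Rightarrow> 'b set \<Rightarrow> ereal" where
  "Jm L Xh b d g S = (INF xy\<in>feas L Xh g S. ereal (market_obj b d S xy))"

definition minima_attained ::
  "'b set \<Rightarrow> ('b \<Rightarrow> (real^'t) set) \<Rightarrow> ('b \<Rightarrow> real^'t \<Rightarrow> real)
    \<Rightarrow> (('b \<Rightarrow> real^'t) \<Rightarrow> real^'p \<Rightarrow> real) \<Rightarrow> (('b \<Rightarrow> real^'t) \<Rightarrow> real^'p \<Rightarrow> real^'q) \<Rightarrow> bool" where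
  "minima_attained L Xh b d g \<longleftrightarrow>
     (\<forall>S\<subseteq>L. feas L Xh g S \<noteq> {} \<longrightarrow>
        (\<exists>xy\<in>feas L Xh g S. \<forall>xy'\<in>feas L Xh g S. market_obj b d S xy \<le> market_obj b d S xy'))"

definition k_feas ::
  "'b set \<Rightarrow> ('b \<Rightarrow> (real^'t) set) \<Rightarrow> ('b \<Rightarrow> real^'t \<Rightarrow> real)
    \<Rightarrow> (('b \<Rightarrow> real^'t) \<Rightarrow> real^'p \<Rightarrow> real) \<Rightarrow> (('b \<Rightarrow> real^'t) \<Rightarrow> real^'p \<Rightarrow> real^'q) \<Rightarrow> nat" where
  "k_feas L Xh b d g = Max {card R | R. R \<subseteq> L \<and> Jm L Xh b d g (L - R) < \<infinity>}"

end

theory Submission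
  imports Defs
begin

lemma obj_eq:
  assumes mb: "market_bids L Xh b" and sub: "S' \<subseteq> S" "S \<subseteq> L"
    and xy: "xy \<in> feas L Xh g S'"
  shows "market_obj b d S xy = market_obj b d S' xy"
proof -
  have fin: "finite S" using mb sub finite_subset unfolding market_bids_def by blast
  have z: "\<forall>l\<in>S - S'. b l (fst xy l) = 0"
    using xy mb sub unfolding feas_def market_bids_def by auto
  have "(\<Sum>l\<in>S. b l (fst xy l)) = (\<Sum>l\<in>S'. b l (fst xy l)) + (\<Sum>l\<in>S - S'. b l (fst xy l))"
    using fin sub by (metis add.commute sum.subset_diff)
  also have "(\<Sum>l\<in>S - S'. b l (fst xy l)) = 0" using z by simp
  finally show ?thesis unfolding market_obj_def by simp
qed

lemma feas_mono: "S' \<subseteq> S \<Longrightarrow> feas L Xh g S' \<subseteq> feas L Xh g S"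
  unfolding feas_def by auto

lemma J_mono:
  assumes mb: "market_bids L Xh b" and sub: "S' \<subseteq> S" "S \<subseteq> L"
  shows "Jm L Xh b d g S \<le> Jm L Xh b d g S'"
  unfolding Jm_def
proof (rule INF_greatest)
  fix xy assume xy: "xy \<in> feas L Xh g S'"
  hence "xy \<in> feas L Xh g S" using feas_mono[OF sub(1)] by blast
  hence "(INF xy\<in>feas L Xh g S. ereal (market_obj b d S xy)) \<le> ereal (market_obj b d S xy)"
    by (rule INF_lower)
  thus "(INF xy\<in>feas L Xh g S. ereal (market_obj b d S xy)) \<le> ereal (market_obj b d S' xy)"
    using obj_eq[OF mb sub xy] by simp
qed

lemma J_fin:
  assumes ma: "minima_attained L Xh b d g" and sub: "S \<subseteq> L"
    and lt: "Jm L Xh b d g S < \<infinity>"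
  shows "\<exists>r. Jm L Xh b d g S = ereal r"
proof -
  have ne: "feas L Xh g S \<noteq> {}" using lt unfolding Jm_def by (auto simp: top_ereal_def)
  then obtain xy where xy: "xy \<in> feas L Xh g S"
    and mn: "\<forall>xy'\<in>feas L Xh g S. market_obj b d S xy \<le> market_obj b d S xy'"
    using ma sub unfolding minima_attained_def by blast
  have "Jm L Xh b d g S = ereal (market_obj b d S xy)"
    unfolding Jm_def
    by (rule antisym, rule INF_lower[OF xy], rule INF_greatest, use mn in auto)
  thus ?thesis by blast
qed

theorem theorem2:
  fixes L :: "'b set" and Xh :: "'b \<Rightarrow> (real^'t) set" and b :: "'b \<Rightarrow> real^'t \<Rightarrow> real"
    and d :: "('b \<Rightarrow> real^'t) \<Rightarrow> real^'p \<Rightarrow> real"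
    and g :: "('b \<Rightarrow> real^'t) \<Rightarrow> real^'p \<Rightarrow> real^'q"
  assumes "market_bids L Xh b"
    and "minima_attained L Xh b d g"
    and "Jm L Xh b d g L < \<infinity>"
    and "k_feas L Xh b d g \<ge> 1"
  shows "\<forall>K S. K \<subseteq> L \<longrightarrow> S \<subseteq> L \<longrightarrow> Jm L Xh b d g (S - K) < \<infinity> \<longrightarrow>
           ereal (1 / real (k_feas L Xh b d g)) *
             (\<Sum>l\<in>K. Jm L Xh b d g (S - {l}) - Jm L Xh b d g S)
           \<le> Jm L Xh b d g (S - K) - Jm L Xh b d g S"
proof (intro allI impI)
  fix K S assume K: "K \<subseteq> L" and S: "S \<subseteq> L" and fin: "Jm L Xh b d g (S - K) < \<infinity>"
  define J where "J = Jm L Xh b d g"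
  define k where "k = k_feas L Xh b d g"
  have finL: "finite L" using assms(1) unfolding market_bids_def by auto
  have finK: "finite K" using K finL finite_subset by blast
  have SK: "S - K \<subseteq> L" using S by blast
  obtain c where c: "J (S - K) = ereal c" using J_fin[OF assms(2) SK fin] J_def by blast
  have JSle: "J S \<le> J (S - K)" unfolding J_def by (rule J_mono[OF assms(1) _ S]) auto
  obtain a where a: "J S = ereal a"
    using J_fin[OF assms(2) S] JSle fin J_def by fastforce
  have ac: "a \<le> c" using JSle a c by simp
  define v where "v l = real_of_ereal (J (S - {l}))" for l
  have v: "J (S - {l}) = ereal (v l) \<and> a \<le> v l \<and> v l \<le> c \<and> (l \<notin> S \<longrightarrow> v l = a)"
    if l: "l \<in> K" for l
  proof (cases "l \<in> S")
    case True
    have le1: "J (S - {l}) \<le> J (S - K)" unfolding J_def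
      by (rule J_mono[OF assms(1)]) (use l S in auto)
    have le2: "J S \<le> J (S - {l})" unfolding J_def
      by (rule J_mono[OF assms(1) _ S]) auto
    have Sl: "S - {l} \<subseteq> L" using S by blast
    have "J (S - {l}) < \<infinity>" by (rule le_less_trans[OF le1]) (simp add: c)
    then obtain r where "J (S - {l}) = ereal r"
      using J_fin[OF assms(2) Sl] J_def by blast
    hence "J (S - {l}) = ereal (v l)" unfolding v_def by simp
    with le1 le2 a c True show ?thesis by simp
  next
    case False
    hence "S - {l} = S" by auto
    thus ?thesis unfolding v_def using a ac False by simp
  qed
  have sumeq: "(\<Sum>l\<in>K. J (S - {l}) - J S) = ereal (\<Sum>l\<in>K. v l - a)"
  proof -
    have "(\<Sum>l\<in>K. J (S - {l}) - J S) = (\<Sum>l\<in>K. ereal (v l - a))"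
      by (rule sum.cong) (use v a in auto)
    thus ?thesis by (simp add: sum_ereal)
  qed
  have s1: "(\<Sum>l\<in>K. v l - a) = (\<Sum>l\<in>K \<inter> S. v l - a)"
    by (rule sum.mono_neutral_right) (use finK v in auto)
  have s2: "(\<Sum>l\<in>K \<inter> S. v l - a) \<le> (\<Sum>l\<in>K \<inter> S. c - a)"
    by (rule sum_mono) (use v in auto)
  have cardle: "card (K \<inter> S) \<le> k"
  proof -
    let ?R = "L - (S - K)"
    have "L - ?R = S - K" using S by blast
    hence m: "card ?R \<in> {card R | R. R \<subseteq> L \<and> Jm L Xh b d g (L - R) < \<infinity>}"
      using fin by auto
    have "finite {card R | R. R \<subseteq> L \<and> Jm L Xh b d g (L - R) < \<infinity>}"
    proof -
      have "{card R | R. R \<subseteq> L \<and> Jm L Xh b d g (L - R) < \<infinity>} \<subseteq> card ` Pow L" by auto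
      thus ?thesis using finL finite_subset by blast
    qed
    hence "card ?R \<le> k" using m unfolding k_def k_feas_def by (rule Max_ge)
    moreover have "card (K \<inter> S) \<le> card ?R"
      by (rule card_mono) (use finL K S in auto)
    ultimately show ?thesis by simp
  qed
  have kpos: "(1::real) \<le> real k" using assms(4) k_def by simp
  have "(\<Sum>l\<in>K. v l - a) \<le> real (card (K \<inter> S)) * (c - a)" using s1 s2 by simp
  also have "\<dots> \<le> real k * (c - a)" using cardle ac by (intro mult_right_mono) auto
  finally have main: "(\<Sum>l\<in>K. v l - a) \<le> real k * (c - a)" .
  have "1 / real k * (\<Sum>l\<in>K. v l - a) \<le> c - a"
    using main kpos by (simp add: field_simps)
  thus "ereal (1 / real (k_feas L Xh b d g)) *
             (\<Sum>l\<in>K. Jm L Xh b d g (S - {l}) - Jm L Xh b d g S)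
           \<le> Jm L Xh b d g (S - K) - Jm L Xh b d g S"
    using sumeq a c unfolding J_def k_def by simp
qed

end
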